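(* If $n>2$ is even, then there exists more than one $\{1,\dots,n-1\}$-canonical element of $\mathrm{SU}(n)$.
   Context: For $\mathrm{SU}(n)$: $E_i$ is the $n\times n$ diagonal matrix with $(i,i)$ entry $\sqrt{-1}$, others $0$; $\mathfrak t=\{\sum a_iE_i:a_i\in\mathbb R,\sum a_i=0\}$; $H_i=\frac{n-i}{n}(E_1+\dots+E_i)-\frac{i}{n}(E_{i+1}+\dots+E_n)$, $i=1,\dots,n-1$. $\mathfrak I(\mathrm{SU}(n))=\{\sum a_iE_i\in\mathfrak t: a_i\in\mathbb Z\}$. $\mathfrak I'(\mathrm{SU}(n))$ is the set of elements of $\mathfrak I(\mathrm{SU}(n))$ of the form $\sum n_iH_i$ with all $n_i\ge0$. Partial order: $\sum n_iH_i\preceq\sum n_i'H_i$ iff $n_i'\le n_i$ for all $i$. For $I\subseteq\{1,\dots,n-1\}$, $\mathfrak C_I=\{\sum n_iH_i:n_i\ge0,\ n_j>0\iff j\in I\}$; an $I$-canonical element is a maximal element of $(\mathfrak I'(\mathrm{SU}(n))\cap\mathfrak C_I,\preceq)$. *)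

theory Defs
  imports Complex_Main
begin

text \<open>Elements of the Cartan subalgebra t of SU(n) are represented by their
real coordinates with respect to E_1,...,E_n: a function a :: nat => real with
a k = 0 for k outside {1..n}; the element is sum_k a k E_k.\<close>

definition su_t :: "nat \<Rightarrow> (nat \<Rightarrow> real) set" where
  "su_t n = {a. (\<forall>k. k \<notin> {1..n} \<longrightarrow> a k = 0) \<and> (\<Sum>k=1..n. a k) = 0}"

definition su_H :: "nat \<Rightarrow> nat \<Rightarrow> (nat \<Rightarrow> real)" where
  "su_H n i = (\<lambda>k. if 1 \<le> k \<and> k \<le> i then (real n - real i) / real n
                  else if i < k \<and> k \<le> n then - real i / real n else 0)"

definition su_comb :: "nat \<Rightarrow> (nat \<Rightarrow> real) \<Rightarrow> (nat \<Rightarrow> real)" where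
  "su_comb n c = (\<lambda>k. \<Sum>i=1..n-1. c i * su_H n i k)"

definition su_lattice :: "nat \<Rightarrow> (nat \<Rightarrow> real) set" where
  "su_lattice n = {a \<in> su_t n. \<forall>k. a k \<in> \<int>}"

definition su_lattice' :: "nat \<Rightarrow> (nat \<Rightarrow> real) set" where
  "su_lattice' n = {a \<in> su_lattice n.
      \<exists>c. (\<forall>i\<in>{1..n-1}. c i \<ge> 0) \<and> a = su_comb n c}"

definition su_preceq :: "nat \<Rightarrow> (nat \<Rightarrow> real) \<Rightarrow> (nat \<Rightarrow> real) \<Rightarrow> bool" where
  "su_preceq n x y \<longleftrightarrow> (\<exists>c c'. x = su_comb n c \<and> y = su_comb n c' \<and>
      (\<forall>i\<in>{1..n-1}. c' i \<le> c i))"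

definition su_cone :: "nat \<Rightarrow> nat set \<Rightarrow> (nat \<Rightarrow> real) set" where
  "su_cone n I = {x. \<exists>c. (\<forall>i\<in>{1..n-1}. c i \<ge> 0 \<and> (c i > 0 \<longleftrightarrow> i \<in> I)) \<and> x = su_comb n c}"

definition su_canonical :: "nat \<Rightarrow> nat set \<Rightarrow> (nat \<Rightarrow> real) \<Rightarrow> bool" where
  "su_canonical n I x \<longleftrightarrow> x \<in> su_lattice' n \<inter> su_cone n I \<and>
     (\<forall>y \<in> su_lattice' n \<inter> su_cone n I. su_preceq n x y \<longrightarrow> y = x)"

end

theory Submission
  imports Defs
begin

lemma H_diff:
  assumes "1 \<le> i" "i \<le> n - 1" "1 \<le> k" "k \<le> n - 1"
  shows "su_H n i k - su_H n i (Suc k) = (if i = k then 1 else 0)"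
proof -
  have n: "real n > 0" using assms by simp
  show ?thesis using assms n unfolding su_H_def by (auto simp: field_simps)
qed

lemma comb_diff:
  assumes "1 \<le> k" "k \<le> n - 1"
  shows "su_comb n c k - su_comb n c (Suc k) = c k"
proof -
  have "su_comb n c k - su_comb n c (Suc k) = (\<Sum>i=1..n-1. c i * (su_H n i k - su_H n i (Suc k)))"
    unfolding su_comb_def by (simp add: sum_subtractf right_diff_distrib)
  also have "\<dots> = (\<Sum>i=1..n-1. if i = k then c i else 0)"
    by (rule sum.cong) (use assms H_diff in auto)
  also have "\<dots> = c k" using assms by simp
  finally show ?thesis .
qed

lemma comb_last:
  assumes "n \<ge> 1"
  shows "su_comb n c n = - (\<Sum>i=1..n-1. c i * real i) / real n"
proof -
  have "su_comb n c n = (\<Sum>i=1..n-1. c i * (- real i / real n))"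
    unfolding su_comb_def by (rule sum.cong) (use assms in \<open>auto simp: su_H_def\<close>)
  also have "\<dots> = - (\<Sum>i=1..n-1. c i * real i) / real n"
    by (simp add: sum_divide_distrib sum_negf)
  finally show ?thesis .
qed

lemma comb_out:
  assumes "k \<notin> {1..n}"
  shows "su_comb n c k = 0"
proof -
  have "k = 0 \<or> k > n" using assms by auto
  then show ?thesis unfolding su_comb_def su_H_def
    by (intro sum.neutral) auto
qed

lemma H_sum:
  assumes "1 \<le> i" "i \<le> n - 1"
  shows "(\<Sum>k=1..n. su_H n i k) = 0"
proof -
  have n: "real n > 0" using assms by simp
  have "(\<Sum>k=1..n. su_H n i k) = (\<Sum>k=1..n. if k \<le> i then (real n - real i) / real n else - real i / real n)"
    by (rule sum.cong) (auto simp: su_H_def)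
  also have "\<dots> = (\<Sum>k\<in>{1..i}. (real n - real i) / real n) + (\<Sum>k\<in>{i<..n}. - real i / real n)"
  proof -
    have e1: "{1..n} \<inter> {k. k \<le> i} = {1..i}" using assms by auto
    have e2: "{1..n} \<inter> - {k. k \<le> i} = {i<..n}" using assms by auto
    show ?thesis
      using sum.If_cases[of "{1..n}" "\<lambda>k. k \<le> i" "\<lambda>_. (real n - real i) / real n" "\<lambda>_. - real i / real n"]
      unfolding e1 e2 by simp
  qed
  also have "\<dots> = real i * (real n - real i) / real n + (real n - real i) * (- real i / real n)"
    using assms by (simp add: of_nat_diff)
  also have "\<dots> = 0" by (simp add: field_simps)
  finally show ?thesis .
qed

lemma comb_sum:
  assumes "n \<ge> 1"
  shows "(\<Sum>k=1..n. su_comb n c k) = 0"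
proof -
  have "(\<Sum>k=1..n. su_comb n c k) = (\<Sum>i=1..n-1. c i * (\<Sum>k=1..n. su_H n i k))"
    unfolding su_comb_def by (subst sum.swap) (simp add: sum_distrib_left)
  also have "\<dots> = 0"
  proof (rule sum.neutral, rule ballI)
    fix i assume "i \<in> {1..n-1}"
    then show "c i * (\<Sum>k=1..n. su_H n i k) = 0" using H_sum[of i n] by simp
  qed
  finally show ?thesis .
qed

lemma comb_down:
  assumes "1 \<le> k" "k \<le> n"
  shows "su_comb n c k = su_comb n c n + (\<Sum>i\<in>{k..<n}. c i)"
  using assms
proof (induction "n - k" arbitrary: k)
  case 0 then show ?case by simp
next
  case (Suc d)
  then have "k < n" by simp
  have "su_comb n c (Suc k) = su_comb n c n + (\<Sum>i\<in>{Suc k..<n}. c i)"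
    using Suc by simp
  moreover have "su_comb n c k - su_comb n c (Suc k) = c k"
    using Suc \<open>k < n\<close> by (intro comb_diff) auto
  moreover have "(\<Sum>i\<in>{k..<n}. c i) = c k + (\<Sum>i\<in>{Suc k..<n}. c i)"
    using \<open>k < n\<close> by (simp add: sum.atLeast_Suc_lessThan)
  ultimately show ?case by linarith
qed

lemma comb_lattice:
  assumes "n \<ge> 1" "\<forall>i\<in>{1..n-1}. c i \<in> \<int>" "su_comb n c n \<in> \<int>"
  shows "su_comb n c \<in> su_lattice n"
proof -
  have "su_comb n c k \<in> \<int>" for k
  proof (cases "k \<in> {1..n}")
    case True
    have "(\<Sum>i\<in>{k..<n}. c i) \<in> \<int>"
      by (rule Ints_sum) (use assms True in auto)
    then show ?thesis using comb_down[of k n c] True assms by auto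
  qed (simp add: comb_out)
  then show ?thesis using assms comb_out comb_sum
    unfolding su_lattice_def su_t_def by auto
qed

lemma Ints_pos_ge1: "(x::real) \<in> \<int> \<Longrightarrow> x > 0 \<Longrightarrow> x \<ge> 1"
  by (elim Ints_cases) simp

lemma comb_cong: "\<forall>i\<in>{1..n-1}. c i = d i \<Longrightarrow> su_comb n c = su_comb n d"
  unfolding su_comb_def by (intro ext sum.cong) auto

lemma coef_eq:
  assumes "su_comb n c = su_comb n d" "i \<in> {1..n-1}"
  shows "c i = d i"
  using comb_diff[of i n c] comb_diff[of i n d] assms by auto

lemma canon_crit:
  assumes n2: "n \<ge> 2" and e: "\<forall>i\<in>{1..n-1}. e i \<in> \<int> \<and> e i \<ge> 1" and en: "su_comb n e n \<in> \<int>"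
  and minim: "\<And>c'. \<forall>i\<in>{1..n-1}. c' i \<in> \<int> \<and> 1 \<le> c' i \<and> c' i \<le> e i
        \<Longrightarrow> su_comb n c' n \<in> \<int> \<Longrightarrow> \<forall>i\<in>{1..n-1}. c' i = e i"
  shows "su_canonical n {1..n-1} (su_comb n e)"
proof -
  have "su_comb n e \<in> su_lattice n" using comb_lattice[of n e] n2 e en by auto
  moreover have "\<forall>i\<in>{1..n-1}. 0 \<le> e i" using e by force
  ultimately have xl: "su_comb n e \<in> su_lattice' n"
    unfolding su_lattice'_def by blast
  have xc: "su_comb n e \<in> su_cone n {1..n-1}"
  proof -
    have "\<forall>i\<in>{1..n-1}. 0 \<le> e i \<and> (0 < e i) = (i \<in> {1..n-1})"
    proof
      fix i assume "i \<in> {1..n-1}" then have "e i \<ge> 1" using e by blast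
      then show "0 \<le> e i \<and> (0 < e i) = (i \<in> {1..n-1})" using \<open>i \<in> {1..n-1}\<close> by simp
    qed
    then show ?thesis unfolding su_cone_def by blast
  qed
  have "y = su_comb n e" if yl: "y \<in> su_lattice' n" and yc: "y \<in> su_cone n {1..n-1}"
     and pq: "su_preceq n (su_comb n e) y" for y
  proof -
    from yc obtain cy where cy: "\<forall>i\<in>{1..n-1}. cy i \<ge> 0 \<and> (cy i > 0 \<longleftrightarrow> i \<in> {1..n-1})"
      and ydef: "y = su_comb n cy" unfolding su_cone_def by blast
    have yint: "\<forall>k. y k \<in> \<int>" using yl unfolding su_lattice'_def su_lattice_def by blast
    from pq obtain c c'' where cc: "su_comb n e = su_comb n c" "y = su_comb n c''"
      "\<forall>i\<in>{1..n-1}. c'' i \<le> c i" unfolding su_preceq_def by blast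
    have P: "cy i \<in> \<int> \<and> 1 \<le> cy i \<and> cy i \<le> e i" if i: "i \<in> {1..n-1}" for i
    proof -
      have "cy i = y i - y (Suc i)" using comb_diff[of i n cy] i ydef by auto
      then have ci: "cy i \<in> \<int>" using yint by simp
      moreover have "1 \<le> cy i" using Ints_pos_ge1[OF ci] cy i by auto
      moreover have "cy i = c'' i" using coef_eq[of n cy c'' i] ydef cc i by auto
      moreover have "e i = c i" using coef_eq[of n e c i] cc i by auto
      ultimately show ?thesis using cc i by auto
    qed
    have "su_comb n cy n \<in> \<int>" using yint ydef by simp
    then have "\<forall>i\<in>{1..n-1}. cy i = e i" using minim P by blast
    then show ?thesis using ydef comb_cong by blast
  qed
  then show ?thesis unfolding su_canonical_def using xl xc by blast
qed

lemma val_one: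
  assumes "n \<ge> 1" "p \<in> {1..n-1}" "\<forall>i\<in>{1..n-1}. i \<noteq> p \<longrightarrow> c i = 1"
  shows "su_comb n c n = -((\<Sum>i=1..n-1. real i) + (c p - 1) * real p) / real n"
proof -
  have "(\<Sum>i=1..n-1. c i * real i) = (\<Sum>i=1..n-1. real i + (if i = p then (c p - 1) * real p else 0))"
    by (rule sum.cong) (use assms in \<open>auto simp: algebra_simps\<close>)
  also have "\<dots> = (\<Sum>i=1..n-1. real i) + (c p - 1) * real p"
    using assms by (simp add: sum.distrib)
  finally show ?thesis using comb_last[of n c] assms by simp
qed

lemma gauss2:
  assumes "n = 2 * m" "m \<ge> 1"
  shows "(\<Sum>i=1..n-1. real i) = real m * (2 * real m - 1)"
proof -
  have "2 * (\<Sum>i = Suc 0..n-1. real i) = real (n-1) * (real (n-1) + 1)"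
    using double_gauss_sum_from_Suc_0[of "n-1", where 'a=real] by simp
  moreover have "real (n-1) = 2 * real m - 1" using assms by (simp add: of_nat_diff)
  ultimately have "2 * (\<Sum>i = 1..n-1. real i) = (2 * real m - 1) * (2 * real m - 1 + 1)" by simp
  also have "\<dots> = 2 * (real m * (2 * real m - 1))" by (simp add: algebra_simps)
  finally show ?thesis by linarith
qed

lemma int_lemma: "(m::int) \<ge> 1 \<Longrightarrow> 0 \<le> m - 2*m*w \<Longrightarrow> m - 2*m*w \<le> m \<Longrightarrow> w = 0"
proof -
  assume a: "(m::int) \<ge> 1" "0 \<le> m - 2*m*w" "m - 2*m*w \<le> m"
  have "0 \<le> (2*m)*w" using a by simp
  then have "w \<ge> 0" using a by (simp add: zero_le_mult_iff)
  have "(2*m)*w < (2*m)*1" using a by simp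
  then have "w < 1" using a by (simp add: mult_less_cancel_left)
  then show "w = 0" using \<open>w \<ge> 0\<close> by simp
qed

theorem mainTheorem12:
  fixes n :: nat
  assumes "n > 2" and "even n"
  shows "\<exists>x y. su_canonical n {1..n-1} x \<and> su_canonical n {1..n-1} y \<and> x \<noteq> y"
proof -
  obtain m where nm: "n = 2 * m" using assms by (auto elim: evenE)
  have m2: "m \<ge> 2" using assms nm by simp
  have G: "(\<Sum>i=1..n-1. real i) = real m * (2 * real m - 1)" using gauss2 nm m2 by simp
  have mr: "m \<in> {1..n-1}" using nm m2 by simp
  have one: "(1::nat) \<in> {1..n-1}" using assms by simp
  define eA where "eA = (\<lambda>i::nat. 1 + (if i = m then 1 else 0::real))"
  define eB where "eB = (\<lambda>i::nat. 1 + (if i = 1 then real m else 0::real))"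
  have A: "su_canonical n {1..n-1} (su_comb n eA)"
  proof (rule canon_crit)
    show "2 \<le> n" using assms by simp
    show "\<forall>i\<in>{1..n-1}. eA i \<in> \<int> \<and> eA i \<ge> 1" unfolding eA_def by auto
    have "su_comb n eA n = -((\<Sum>i=1..n-1. real i) + (eA m - 1) * real m) / real n"
      using val_one[OF _ mr, of eA] assms unfolding eA_def by auto
    also have "\<dots> = - real m" using G nm m2 unfolding eA_def by (simp add: field_simps)
    finally show "su_comb n eA n \<in> \<int>" by simp
  next
    fix c' assume c': "\<forall>i\<in>{1..n-1}. c' i \<in> \<int> \<and> 1 \<le> c' i \<and> c' i \<le> eA i"
      and ci: "su_comb n c' n \<in> \<int>"
    have oth: "\<forall>i\<in>{1..n-1}. i \<noteq> m \<longrightarrow> c' i = 1"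
      using c' unfolding eA_def by fastforce
    obtain k where k: "c' m = of_int k" using c' mr Ints_cases by metis
    have "1 \<le> c' m \<and> c' m \<le> eA m" using c' mr by blast
    then have k12: "1 \<le> k" "k \<le> 2" using k unfolding eA_def by auto
    obtain z where z: "su_comb n c' n = of_int z" using ci Ints_cases by metis
    have "su_comb n c' n = -((\<Sum>i=1..n-1. real i) + (c' m - 1) * real m) / real n"
      using val_one[OF _ mr oth] assms by auto
    also have "\<dots> = -(2 * real m + of_int k - 2) / 2" using G nm m2 k by (simp add: field_simps)
    finally have "real_of_int (2 * z) = real_of_int (-(2 * int m + k - 2))" using z by simp
    then have "2 * z = -(2 * int m + k - 2)" by (simp only: of_int_eq_iff)
    then have "k = 2" using k12 by presburger
    then show "\<forall>i\<in>{1..n-1}. c' i = eA i" using oth k unfolding eA_def by auto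
  qed
  have B: "su_canonical n {1..n-1} (su_comb n eB)"
  proof (rule canon_crit)
    show "2 \<le> n" using assms by simp
    show "\<forall>i\<in>{1..n-1}. eB i \<in> \<int> \<and> eB i \<ge> 1" unfolding eB_def by auto
    have "su_comb n eB n = -((\<Sum>i=1..n-1. real i) + (eB 1 - 1) * real 1) / real n"
      using val_one[OF _ one, of eB] assms unfolding eB_def by auto
    also have "\<dots> = - real m" using G nm m2 unfolding eB_def by (simp add: field_simps)
    finally show "su_comb n eB n \<in> \<int>" by simp
  next
    fix c' assume c': "\<forall>i\<in>{1..n-1}. c' i \<in> \<int> \<and> 1 \<le> c' i \<and> c' i \<le> eB i"
      and ci: "su_comb n c' n \<in> \<int>"
    have oth: "\<forall>i\<in>{1..n-1}. i \<noteq> 1 \<longrightarrow> c' i = 1"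
      using c' unfolding eB_def by fastforce
    obtain k where k: "c' 1 = of_int k" using c' one Ints_cases by metis
    have "1 \<le> c' 1 \<and> c' 1 \<le> eB 1" using c' one by blast
    then have k12: "1 \<le> k" "k \<le> int m + 1" using k unfolding eB_def by auto
    obtain z where z: "su_comb n c' n = of_int z" using ci Ints_cases by metis
    have "su_comb n c' n = -((\<Sum>i=1..n-1. real i) + (c' 1 - 1) * real 1) / real n"
      using val_one[OF _ one oth] assms by auto
    also have "\<dots> = -(real m * (2 * real m - 1) + of_int k - 1) / (2 * real m)"
      using G nm k by simp
    finally have "real_of_int (- 2 * int m * z) = real_of_int (int m * (2 * int m - 1) + k - 1)"
      using z m2 by (simp add: field_simps)
    then have eq: "- 2 * int m * z = int m * (2 * int m - 1) + k - 1" by (simp only: of_int_eq_iff)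
    then have "k - 1 = int m - 2 * int m * (z + int m)" by (simp add: algebra_simps)
    then have h1: "0 \<le> int m - 2 * int m * (z + int m)" "int m - 2 * int m * (z + int m) \<le> int m"
      using k12 by linarith+
    have "z + int m = 0" by (rule int_lemma[OF _ h1]) (use m2 in simp)
    then have "k = int m + 1" using \<open>k - 1 = _\<close> by simp
    then show "\<forall>i\<in>{1..n-1}. c' i = eB i" using oth k unfolding eB_def by auto
  qed
  have "su_comb n eA \<noteq> su_comb n eB"
  proof
    assume "su_comb n eA = su_comb n eB"
    then have "eA 1 = eB 1" using coef_eq one by blast
    then show False using m2 unfolding eA_def eB_def by simp
  qed
  then show ?thesis using A B by blast
qed

end
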